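(* (Gronwall-type lemma.) Let $z\in C^{\beta\text{-Hol}}([-r,T],\mathbb{R}^d)$ and suppose there are constants $A,C>0$ such that for all $0\le s\le t\le T$, $$|||z|||_{\beta,[s,t]}\le A+C\big((t-s)^{1-\beta}+(t-s)^{\nu-\beta}|||\omega|||_{\nu,[s,t]}\big)\|z\|_{\infty,\beta,[s-r,t]}.$$ Let $\mu\in(0,\min\{\tfrac12,C\})$ and let $N(t,\omega)$ be the counting function of the stopping times associated with this $C$ and $\mu$. Then for all $t\in[0,T]$, $$\|z_t\|_{\infty,\beta,[-r,0]}\le(1-2\mu)^{-(N(t,\omega)+1)}\Big[\frac{A}{\mu}+\|z\|_{\infty,\beta,[-r,0]}\Big].$$
   Context: $\|\cdot\|$ is the Euclidean norm; $r,T>0$; $z_t(u)=z(t+u)$, $u\in[-r,0]$. For $0<\alpha\le1$: $|||z|||_{\alpha,[a,b]}=\sup_{a\le s<t\le b}\frac{\|z(t)-z(s)\|}{(t-s)^\alpha}$, $\|z\|_{\infty,\alpha,[a,b]}=\sup_{[a,b]}\|z\|+|||z|||_{\alpha,[a,b]}$, $C^{\alpha\text{-Hol}}$ the space where finite. Parameters: $\nu\in(\tfrac12,1]$, $\beta\in(0,\nu)$, $\omega\in C^{\nu\text{-Hol}}([0,T],\mathbb{R})$ with $\lim_{h\to0}\sup_{0\le s<t\le T,\,t-s\le h}\frac{|\omega(t)-\omega(s)|}{(t-s)^\nu}=0$. Stopping times: given $C>0$ and $\mu\in(0,C)$, $t_0=0$, $t_{i+1}=\sup\{t\in[t_i,T]: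 C[(t-t_i)^{1-\beta}+(t-t_i)^{\nu-\beta}|||\omega|||_{\nu,[t_i,t]}]\le\mu\}$; counting function $N(t,\omega):=\#\{i\ge1:t_i<t\}$. *)

theory Defs
  imports "HOL-Analysis.Analysis"
begin

definition holder_quot :: "real \<Rightarrow> (real \<Rightarrow> 'a::real_normed_vector) \<Rightarrow> real \<Rightarrow> real \<Rightarrow> real set" where
  "holder_quot \<alpha> z a b = {norm (z t - z s) / (t - s) powr \<alpha> | s t. a \<le> s \<and> s < t \<and> t \<le> b}"

definition holder_semi :: "real \<Rightarrow> (real \<Rightarrow> 'a::real_normed_vector) \<Rightarrow> real \<Rightarrow> real \<Rightarrow> real" where
  "holder_semi \<alpha> z a b = (if a < b then Sup (holder_quot \<alpha> z a b) else 0)"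

definition holder_space :: "real \<Rightarrow> real \<Rightarrow> real \<Rightarrow> (real \<Rightarrow> 'a::real_normed_vector) \<Rightarrow> bool" where
  "holder_space \<alpha> a b z \<longleftrightarrow> bdd_above (holder_quot \<alpha> z a b)"

definition sup_norm :: "(real \<Rightarrow> 'a::real_normed_vector) \<Rightarrow> real \<Rightarrow> real \<Rightarrow> real" where
  "sup_norm z a b = Sup ((\<lambda>t. norm (z t)) ` {a..b})"

definition holder_norm :: "real \<Rightarrow> (real \<Rightarrow> 'a::real_normed_vector) \<Rightarrow> real \<Rightarrow> real \<Rightarrow> real" where
  "holder_norm \<alpha> z a b = sup_norm z a b + holder_semi \<alpha> z a b"

fun stop_time :: "real \<Rightarrow> real \<Rightarrow> real \<Rightarrow> real \<Rightarrow> (real \<Rightarrow> real) \<Rightarrow> real \<Rightarrow> nat \<Rightarrow> real" where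
  "stop_time C \<mu> \<beta> \<nu> \<omega> T 0 = 0"
| "stop_time C \<mu> \<beta> \<nu> \<omega> T (Suc i) =
     (let ti = stop_time C \<mu> \<beta> \<nu> \<omega> T i in
      Sup {t \<in> {ti..T}. C * ((t - ti) powr (1 - \<beta>) + (t - ti) powr (\<nu> - \<beta>) * holder_semi \<nu> \<omega> ti t) \<le> \<mu>})"

definition count_stop :: "real \<Rightarrow> real \<Rightarrow> real \<Rightarrow> real \<Rightarrow> (real \<Rightarrow> real) \<Rightarrow> real \<Rightarrow> real \<Rightarrow> nat" where
  "count_stop C \<mu> \<beta> \<nu> \<omega> T t = card {i. i \<ge> 1 \<and> stop_time C \<mu> \<beta> \<nu> \<omega> T i < t}"

end

theory Submission
  imports Defs
begin

lemma hq_le: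
  assumes "bdd_above (holder_quot \<alpha> z a b)" "a \<le> s" "s < t" "t \<le> b"
  shows "norm (z t - z s) / (t - s) powr \<alpha> \<le> holder_semi \<alpha> z a b"
proof -
  have "a < b" using assms by linarith
  moreover have "norm (z t - z s) / (t - s) powr \<alpha> \<in> holder_quot \<alpha> z a b"
    unfolding holder_quot_def using assms by blast
  ultimately show ?thesis unfolding holder_semi_def using assms(1) by (simp add: cSup_upper)
qed

lemma hs_nonneg:
  assumes "bdd_above (holder_quot \<alpha> z a b)"
  shows "0 \<le> holder_semi \<alpha> z a b"
proof (cases "a < b")
  case True
  have "0 \<le> norm (z b - z a) / (b - a) powr \<alpha>" by simp
  also have "\<dots> \<le> holder_semi \<alpha> z a b" using hq_le[OF assms, of a b] True by simp
  finally show ?thesis .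
qed (simp add: holder_semi_def)

lemma hq_le':
  assumes "bdd_above (holder_quot \<alpha> z a b)" "a \<le> s" "s \<le> t" "t \<le> b"
  shows "norm (z t - z s) \<le> holder_semi \<alpha> z a b * (t - s) powr \<alpha>"
proof (cases "s < t")
  case True
  have "(t - s) powr \<alpha> > 0" using True by simp
  with hq_le[OF assms(1,2) True assms(4)] show ?thesis by (simp add: divide_le_eq)
next
  case False
  then have "s = t" using assms by simp
  then show ?thesis using hs_nonneg[OF assms(1)] by simp
qed

lemma hs_le:
  assumes "\<And>s t. a \<le> s \<Longrightarrow> s < t \<Longrightarrow> t \<le> b \<Longrightarrow> norm (z t - z s) \<le> M * (t - s) powr \<alpha>"
    "0 \<le> M"
  shows "holder_semi \<alpha> z a b \<le> M"
proof (cases "a < b")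
  case True
  have "Sup (holder_quot \<alpha> z a b) \<le> M"
  proof (rule cSup_least)
    show "holder_quot \<alpha> z a b \<noteq> {}" unfolding holder_quot_def using True by blast
    fix x assume "x \<in> holder_quot \<alpha> z a b"
    then obtain s t where st: "x = norm (z t - z s) / (t - s) powr \<alpha>" "a \<le> s" "s < t" "t \<le> b"
      unfolding holder_quot_def by blast
    have "(t - s) powr \<alpha> > 0" using st by simp
    with assms(1)[OF st(2-4)] show "x \<le> M" unfolding st(1) by (simp add: divide_le_eq)
  qed
  then show ?thesis using True unfolding holder_semi_def by simp
qed (use assms in \<open>simp add: holder_semi_def\<close>)

lemma hq_bdd_mono:
  assumes "bdd_above (holder_quot \<alpha> z a b)" "a \<le> a'" "b' \<le> b"
  shows "bdd_above (holder_quot \<alpha> z a' b')"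
proof -
  have "holder_quot \<alpha> z a' b' \<subseteq> holder_quot \<alpha> z a b"
    unfolding holder_quot_def using assms(2,3) by fastforce
  then show ?thesis using assms(1) by (rule bdd_above_mono[rotated])
qed

lemma hs_mono:
  assumes "bdd_above (holder_quot \<alpha> z a b)" "a \<le> a'" "b' \<le> b"
  shows "holder_semi \<alpha> z a' b' \<le> holder_semi \<alpha> z a b"
proof (rule hs_le)
  have bq: "bdd_above (holder_quot \<alpha> z a b)" by fact
  show "0 \<le> holder_semi \<alpha> z a b" by (rule hs_nonneg[OF bq])
  fix s t assume "a' \<le> s" "s < t" "t \<le> b'"
  then show "norm (z t - z s) \<le> holder_semi \<alpha> z a b * (t - s) powr \<alpha>"
    using assms by (intro hq_le'[OF bq]) auto
qed

lemma sn_le: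
  assumes "bdd_above ((\<lambda>t. norm (z t)) ` {a..b})" "a \<le> u" "u \<le> b"
  shows "norm (z u) \<le> sup_norm z a b"
  unfolding sup_norm_def using assms by (auto intro: cSup_upper)

lemma sn_least:
  assumes "a \<le> b" "\<And>u. a \<le> u \<Longrightarrow> u \<le> b \<Longrightarrow> norm (z u) \<le> M"
  shows "sup_norm z a b \<le> M"
  unfolding sup_norm_def using assms by (auto intro!: cSup_least)

lemma sn_nonneg:
  assumes "bdd_above ((\<lambda>t. norm (z t)) ` {a..b})" "a \<le> b"
  shows "0 \<le> sup_norm z a b"
  using sn_le[OF assms(1), of a] assms(2) norm_ge_zero[of "z a"] by linarith

lemma hol_bdd:
  assumes "holder_space \<alpha> a b z" "a \<le> c" "d \<le> b" "0 < \<alpha>"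
  shows "bdd_above ((\<lambda>t. norm (z t)) ` {c..d})"
proof -
  let ?S = "holder_semi \<alpha> z a b"
  have bq: "bdd_above (holder_quot \<alpha> z a b)" using assms(1) unfolding holder_space_def .
  have "norm (z u) \<le> norm (z a) + ?S * (b - a) powr \<alpha>" if "c \<le> u" "u \<le> d" for u
  proof -
    have "norm (z u) \<le> norm (z a) + norm (z u - z a)" by (simp add: norm_triangle_sub)
    also have "norm (z u - z a) \<le> ?S * (u - a) powr \<alpha>"
      using hq_le'[OF bq, of a u] that assms by simp
    also have "?S * (u - a) powr \<alpha> \<le> ?S * (b - a) powr \<alpha>"
      using that assms hs_nonneg[OF bq] by (intro mult_left_mono powr_mono2) auto
    finally show ?thesis by simp
  qed
  then show ?thesis by (auto intro!: bdd_aboveI2)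
qed

lemma hn_mono:
  assumes "holder_space \<alpha> a0 b0 z" "0 < \<alpha>" "a0 \<le> a" "a \<le> a'" "a' \<le> b" "b \<le> b0"
  shows "holder_norm \<alpha> z a' b \<le> holder_norm \<alpha> z a b"
proof -
  have bq: "bdd_above (holder_quot \<alpha> z a0 b0)" using assms(1) unfolding holder_space_def .
  have bn: "bdd_above ((\<lambda>t. norm (z t)) ` {a..b})" using hol_bdd[OF assms(1)] assms by auto
  have "sup_norm z a' b \<le> sup_norm z a b"
    by (rule sn_least) (use assms sn_le[OF bn] in auto)
  moreover have "holder_semi \<alpha> z a' b \<le> holder_semi \<alpha> z a b"
    by (rule hs_mono[OF hq_bdd_mono[OF bq]]) (use assms in auto)
  ultimately show ?thesis unfolding holder_norm_def by simp
qed

lemma hn_shift: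
  assumes "holder_space \<alpha> a0 b0 z" "0 < \<alpha>" "a0 \<le> t - r" "t \<le> b0" "0 < r"
  shows "holder_norm \<alpha> (\<lambda>u. z (t + u)) (-r) 0 \<le> holder_norm \<alpha> z (t - r) t"
proof -
  have bq: "bdd_above (holder_quot \<alpha> z a0 b0)" using assms(1) unfolding holder_space_def .
  have bq2: "bdd_above (holder_quot \<alpha> z (t - r) t)" by (rule hq_bdd_mono[OF bq]) (use assms in auto)
  have bn: "bdd_above ((\<lambda>t. norm (z t)) ` {t-r..t})" using hol_bdd[OF assms(1)] assms by auto
  have "sup_norm (\<lambda>u. z (t + u)) (-r) 0 \<le> sup_norm z (t - r) t"
    by (rule sn_least) (use assms sn_le[OF bn] in auto)
  moreover have "holder_semi \<alpha> (\<lambda>u. z (t + u)) (-r) 0 \<le> holder_semi \<alpha> z (t - r) t"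
  proof (rule hs_le)
    show "0 \<le> holder_semi \<alpha> z (t - r) t" by (rule hs_nonneg[OF bq2])
    fix s s' :: real assume "-r \<le> s" "s < s'" "s' \<le> 0"
    then show "norm (z (t + s') - z (t + s)) \<le> holder_semi \<alpha> z (t - r) t * (s' - s) powr \<alpha>"
      using hq_le'[OF bq2, of "t + s" "t + s'"] by simp
  qed
  ultimately show ?thesis unfolding holder_norm_def by simp
qed

lemma hn_split:
  assumes "holder_space \<alpha> a0 b0 z" "0 < \<alpha>" "a0 \<le> a" "a \<le> c" "c \<le> b" "b \<le> b0" "b - c \<le> 1"
  shows "holder_norm \<alpha> z a b \<le> holder_norm \<alpha> z a c + 2 * holder_semi \<alpha> z c b"
proof -
  have bq: "bdd_above (holder_quot \<alpha> z a0 b0)" using assms(1) unfolding holder_space_def .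
  have bq1: "bdd_above (holder_quot \<alpha> z a c)" by (rule hq_bdd_mono[OF bq]) (use assms in auto)
  have bq2: "bdd_above (holder_quot \<alpha> z c b)" by (rule hq_bdd_mono[OF bq]) (use assms in auto)
  have bn: "bdd_above ((\<lambda>t. norm (z t)) ` {a..c})" using hol_bdd[OF assms(1)] assms by auto
  define S1 where "S1 = holder_semi \<alpha> z a c"
  define S2 where "S2 = holder_semi \<alpha> z c b"
  have S1: "0 \<le> S1" unfolding S1_def by (rule hs_nonneg[OF bq1])
  have S2: "0 \<le> S2" unfolding S2_def by (rule hs_nonneg[OF bq2])
  have "sup_norm z a b \<le> sup_norm z a c + S2"
  proof (rule sn_least)
    show "a \<le> b" using assms by simp
    fix u assume u: "a \<le> u" "u \<le> b"
    show "norm (z u) \<le> sup_norm z a c + S2"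
    proof (cases "u \<le> c")
      case True
      then show ?thesis using sn_le[OF bn, of u] u S2 by simp
    next
      case False
      have "norm (z u) \<le> norm (z c) + norm (z u - z c)" by (simp add: norm_triangle_sub)
      also have "norm (z u - z c) \<le> S2 * (u - c) powr \<alpha>"
        unfolding S2_def using hq_le'[OF bq2, of c u] False u by simp
      also have "\<dots> \<le> S2 * 1"
        using False u assms S2 by (intro mult_left_mono powr_le1) auto
      also have "norm (z c) \<le> sup_norm z a c" using sn_le[OF bn, of c] assms by simp
      finally show ?thesis by simp
    qed
  qed
  moreover have "holder_semi \<alpha> z a b \<le> S1 + S2"
  proof (rule hs_le)
    show "0 \<le> S1 + S2" using S1 S2 by simp
    fix s t assume st: "a \<le> s" "s < t" "t \<le> b"
    have m1: "S1 * (x - y) powr \<alpha> \<le> (S1 + S2) * (t - s) powr \<alpha>" if "s \<le> y" "y \<le> x" "x \<le> t" for x y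
    proof -
      have "S1 * (x - y) powr \<alpha> \<le> S1 * (t - s) powr \<alpha>"
        using that S1 assms by (intro mult_left_mono powr_mono2) auto
      also have "\<dots> \<le> (S1 + S2) * (t - s) powr \<alpha>" using S2 by (simp add: distrib_right)
      finally show ?thesis .
    qed
    have m2: "S2 * (x - y) powr \<alpha> \<le> (S1 + S2) * (t - s) powr \<alpha>" if "s \<le> y" "y \<le> x" "x \<le> t" for x y
    proof -
      have "S2 * (x - y) powr \<alpha> \<le> S2 * (t - s) powr \<alpha>"
        using that S2 assms by (intro mult_left_mono powr_mono2) auto
      also have "\<dots> \<le> (S1 + S2) * (t - s) powr \<alpha>" using S1 by (simp add: distrib_right)
      finally show ?thesis .
    qed
    show "norm (z t - z s) \<le> (S1 + S2) * (t - s) powr \<alpha>"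
    proof (cases "t \<le> c")
      case True
      have "norm (z t - z s) \<le> S1 * (t - s) powr \<alpha>" using hq_le'[OF bq1, of s t] st True unfolding S1_def by simp
      also have "\<dots> \<le> (S1 + S2) * (t - s) powr \<alpha>" using m1[where x=t and y=s] st by simp
      finally show ?thesis .
    next
      case tc: False
      show ?thesis
      proof (cases "c \<le> s")
        case True
        have "norm (z t - z s) \<le> S2 * (t - s) powr \<alpha>" using hq_le'[OF bq2, of s t] st True tc unfolding S2_def by simp
        also have "\<dots> \<le> (S1 + S2) * (t - s) powr \<alpha>" using m2[where x=t and y=s] st by simp
        finally show ?thesis .
      next
        case False
        have "norm (z t - z s) \<le> norm (z c - z s) + norm (z t - z c)"
          using norm_triangle_ineq[of "z c - z s" "z t - z c"] by simp
        also have "\<dots> \<le> S1 * (c - s) powr \<alpha> + S2 * (t - c) powr \<alpha>"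
          using hq_le'[OF bq1, of s c] hq_le'[OF bq2, of c t] st tc False unfolding S1_def S2_def
          by (intro add_mono) auto
        also have "\<dots> \<le> S1 * (t - s) powr \<alpha> + S2 * (t - s) powr \<alpha>"
          using st tc False S1 S2 assms by (intro add_mono mult_left_mono powr_mono2) auto
        finally show ?thesis by (simp add: distrib_right)
      qed
    qed
  qed
  ultimately show ?thesis unfolding holder_norm_def S1_def S2_def by simp
qed

lemma hn_nonneg:
  assumes "holder_space \<alpha> a0 b0 z" "0 < \<alpha>" "a0 \<le> a" "a \<le> b" "b \<le> b0"
  shows "0 \<le> holder_norm \<alpha> z a b"
proof -
  have bq: "bdd_above (holder_quot \<alpha> z a0 b0)" using assms(1) unfolding holder_space_def .
  have bn: "bdd_above ((\<lambda>t. norm (z t)) ` {a..b})" using hol_bdd[OF assms(1)] assms by auto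
  have "0 \<le> sup_norm z a b" by (rule sn_nonneg[OF bn assms(4)])
  moreover have "0 \<le> holder_semi \<alpha> z a b" by (rule hs_nonneg[OF hq_bdd_mono[OF bq]]) (use assms in auto)
  ultimately show ?thesis unfolding holder_norm_def by simp
qed

definition gf :: "real \<Rightarrow> real \<Rightarrow> real \<Rightarrow> (real \<Rightarrow> real) \<Rightarrow> real \<Rightarrow> real \<Rightarrow> real" where
  "gf C \<beta> \<nu> \<omega> a u = C * ((u - a) powr (1 - \<beta>) + (u - a) powr (\<nu> - \<beta>) * holder_semi \<nu> \<omega> a u)"

locale stp =
  fixes C \<mu> \<beta> \<nu> T :: real and \<omega> :: "real \<Rightarrow> real"
  assumes T: "T > 0" and C: "C > 0" and mu: "0 < \<mu>" "\<mu> < C" and beta: "0 < \<beta>" "\<beta> < \<nu>"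
    and nu: "\<nu> \<le> 1"
    and oh: "holder_space \<nu> 0 T \<omega>"
    and ol: "\<forall>\<epsilon>>0. \<exists>h>0. \<forall>s t. 0 \<le> s \<and> s < t \<and> t \<le> T \<and> t - s \<le> h \<longrightarrow>
                      \<bar>\<omega> t - \<omega> s\<bar> / (t - s) powr \<nu> \<le> \<epsilon>"
begin

abbreviation "g \<equiv> gf C \<beta> \<nu> \<omega>"
abbreviation "ts \<equiv> stop_time C \<mu> \<beta> \<nu> \<omega> T"

lemma ts_Suc: "ts (Suc i) = Sup {t \<in> {ts i..T}. g (ts i) t \<le> \<mu>}"
  by (simp add: Let_def gf_def)

lemma bqo: "0 \<le> a \<Longrightarrow> b \<le> T \<Longrightarrow> bdd_above (holder_quot \<nu> \<omega> a b)"
  using hq_bdd_mono[of \<nu> \<omega> 0 T a b] oh unfolding holder_space_def by simp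

lemma g_self: "g a a = 0"
  by (simp add: gf_def holder_semi_def)

lemma g_nonneg: "0 \<le> a \<Longrightarrow> a \<le> u \<Longrightarrow> u \<le> T \<Longrightarrow> 0 \<le> g a u"
  unfolding gf_def using C hs_nonneg[OF bqo, of a u] by simp

lemma g_mono:
  assumes "0 \<le> a" "a \<le> u" "u \<le> u'" "u' \<le> T"
  shows "g a u \<le> g a u'"
proof -
  have h: "holder_semi \<nu> \<omega> a u \<le> holder_semi \<nu> \<omega> a u'"
    by (rule hs_mono[OF bqo]) (use assms in auto)
  have h0: "0 \<le> holder_semi \<nu> \<omega> a u" by (rule hs_nonneg[OF bqo]) (use assms in auto)
  have p1: "(u - a) powr (1 - \<beta>) \<le> (u' - a) powr (1 - \<beta>)"
    using assms beta nu by (intro powr_mono2) auto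
  have p2: "(u - a) powr (\<nu> - \<beta>) \<le> (u' - a) powr (\<nu> - \<beta>)"
    using assms beta nu by (intro powr_mono2) auto
  have "(u - a) powr (\<nu> - \<beta>) * holder_semi \<nu> \<omega> a u \<le> (u' - a) powr (\<nu> - \<beta>) * holder_semi \<nu> \<omega> a u'"
    using p2 h h0 by (intro mult_mono) auto
  then show ?thesis unfolding gf_def using C p1 by (intro mult_left_mono add_mono) auto
qed

lemma ts_props: "0 \<le> ts i \<and> ts i \<le> ts (Suc i) \<and> ts (Suc i) \<le> T"
proof (induction i)
  case 0
  show ?case
  proof -
    let ?S = "{t \<in> {ts 0..T}. g (ts 0) t \<le> \<mu>}"
    have mem: "ts 0 \<in> ?S" using T mu by (simp add: g_self)
    have bdd: "bdd_above ?S" by (rule bdd_aboveI[of _ T]) auto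
    have "ts 0 \<le> Sup ?S" using cSup_upper[OF mem bdd] .
    moreover have "Sup ?S \<le> T" using mem by (intro cSup_least) auto
    ultimately show ?thesis unfolding ts_Suc by simp
  qed
next
  case (Suc i)
  let ?S = "{t \<in> {ts (Suc i)..T}. g (ts (Suc i)) t \<le> \<mu>}"
  have mem: "ts (Suc i) \<in> ?S" using Suc mu by (simp add: g_self)
  have bdd: "bdd_above ?S" by (rule bdd_aboveI[of _ T]) auto
  have "ts (Suc i) \<le> Sup ?S" using cSup_upper[OF mem bdd] .
  moreover have "Sup ?S \<le> T" using mem by (intro cSup_least) auto
  ultimately show ?case unfolding ts_Suc[of "Suc i"] using Suc by simp
qed

lemma ts_mono: "i \<le> j \<Longrightarrow> ts i \<le> ts j"
  by (rule lift_Suc_mono_le[of ts]) (use ts_props in auto)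

lemma ts_T: "0 \<le> ts i \<and> ts i \<le> T"
  using ts_props[of i] by (cases i) (use ts_props in auto)

lemma ts_below:
  assumes "ts i \<le> u" "u < ts (Suc i)"
  shows "g (ts i) u \<le> \<mu>"
proof -
  let ?S = "{t \<in> {ts i..T}. g (ts i) t \<le> \<mu>}"
  have "u < Sup ?S" using assms(2) unfolding ts_Suc .
  then have "ts i \<in> ?S" using ts_T[of i] mu by (simp add: g_self)
  then obtain u' where u': "u' \<in> ?S" "u < u'" using less_cSupE[OF \<open>u < Sup ?S\<close>] by blast
  have "g (ts i) u \<le> g (ts i) u'" by (rule g_mono) (use assms u' ts_T in auto)
  then show ?thesis using u' by simp
qed

lemma omega_left:
  assumes "0 \<le> a" "a < b" "b \<le> T"
  shows "(\<omega> \<longlongrightarrow> \<omega> b) (at_left b)"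
proof -
  have bq: "bdd_above (holder_quot \<nu> \<omega> 0 T)" using oh unfolding holder_space_def .
  let ?H = "holder_semi \<nu> \<omega> 0 T"
  have ev: "eventually (\<lambda>u. norm (\<omega> u - \<omega> b) \<le> ?H * (b - u) powr \<nu>) (at_left b)"
    using eventually_at_left_real[OF assms(2)]
  proof (rule eventually_mono)
    fix u assume "u \<in> {a<..<b}"
    then have "norm (\<omega> b - \<omega> u) \<le> ?H * (b - u) powr \<nu>"
      using assms by (intro hq_le'[OF bq]) auto
    then show "norm (\<omega> u - \<omega> b) \<le> ?H * (b - u) powr \<nu>" by (simp add: norm_minus_commute)
  qed
  have l1: "((\<lambda>u. b - u) \<longlongrightarrow> 0) (at_left b)"
  proof -
    have "((\<lambda>u. b - u) \<longlongrightarrow> b - b) (at_left b)" by (intro tendsto_intros)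
    then show ?thesis by simp
  qed
  have ev2: "eventually (\<lambda>u. 0 \<le> b - u) (at_left b)"
    using eventually_at_left_real[OF assms(2)] by (rule eventually_mono) auto
  have "((\<lambda>u. (b - u) powr \<nu>) \<longlongrightarrow> 0) (at_left b)"
    by (rule tendsto_zero_powrI[OF l1 tendsto_const ev2]) (use beta in auto)
  then have "((\<lambda>u. ?H * (b - u) powr \<nu>) \<longlongrightarrow> 0) (at_left b)"
    by (rule tendsto_mult_right_zero)
  then have "((\<lambda>u. \<omega> u - \<omega> b) \<longlongrightarrow> 0) (at_left b)"
    by (rule Lim_null_comparison[OF ev])
  then show ?thesis by (rule LIM_zero_cancel)
qed

lemma ts_end: "g (ts i) (ts (Suc i)) \<le> \<mu>"
proof -
  define a where "a = ts i"
  define b where "b = ts (Suc i)"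
  have ab: "0 \<le> a" "a \<le> b" "b \<le> T" using ts_props[of i] unfolding a_def b_def by auto
  have below: "g a u \<le> \<mu>" if "a \<le> u" "u < b" for u
    using ts_below that unfolding a_def b_def by auto
  have "g a b \<le> \<mu>"
  proof (cases "a = b")
    case True
    then show ?thesis using mu by (simp add: g_self)
  next
    case False
    then have ab2: "a < b" using ab by simp
    define p where "p = (b - a) powr (1 - \<beta>)"
    define q where "q = (b - a) powr (\<nu> - \<beta>)"
    have q: "q > 0" unfolding q_def using ab2 by simp
    have key: "C * (p + q * Q) \<le> \<mu>" if Qin: "Q \<in> holder_quot \<nu> \<omega> a b" for Q
    proof -
      obtain s t where st: "Q = norm (\<omega> t - \<omega> s) / (t - s) powr \<nu>" "a \<le> s" "s < t" "t \<le> b"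
        using Qin unfolding holder_quot_def by blast
      define f where "f u = C * ((u - a) powr (1 - \<beta>) + (u - a) powr (\<nu> - \<beta>)
           * (norm (\<omega> (min t u) - \<omega> s) / (min t u - s) powr \<nu>))" for u
      have om: "((\<lambda>u. \<omega> (min t u)) \<longlongrightarrow> \<omega> t) (at_left b)"
      proof (cases "t < b")
        case True
        have "eventually (\<lambda>u. \<omega> t = \<omega> (min t u)) (at_left b)"
          using eventually_at_left_real[OF True] by (rule eventually_mono) auto
        then show ?thesis by (rule Lim_transform_eventually[OF tendsto_const])
      next
        case False
        then have tb: "t = b" using st by simp
        have "eventually (\<lambda>u. \<omega> u = \<omega> (min t u)) (at_left b)"
          using eventually_at_left_real[OF ab2] by (rule eventually_mono) (auto simp: tb)
        then show ?thesis unfolding tb by (rule Lim_transform_eventually[OF omega_left[OF ab(1) ab2 ab(3)]])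
      qed
      have mt: "((\<lambda>u. min t u) \<longlongrightarrow> min t b) (at_left b)"
        by (intro tendsto_intros)
      have tb: "min t b = t" using st by simp
      have lim: "(f \<longlongrightarrow> C * ((b - a) powr (1 - \<beta>) + (b - a) powr (\<nu> - \<beta>)
           * (norm (\<omega> t - \<omega> s) / (min t b - s) powr \<nu>))) (at_left b)"
        unfolding f_def
        apply (intro tendsto_intros om mt)
        using ab2 st by (auto simp: tb)
      have ev: "eventually (\<lambda>u. f u \<le> \<mu>) (at_left b)"
      proof -
        have "max a s < b" using st ab2 by simp
        from eventually_at_left_real[OF this] show ?thesis
        proof (rule eventually_mono)
          fix u assume u: "u \<in> {max a s<..<b}"
          have "norm (\<omega> (min t u) - \<omega> s) / (min t u - s) powr \<nu> \<le> holder_semi \<nu> \<omega> a u"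
            using u st ab by (intro hq_le[OF bqo]) auto
          then have "f u \<le> g a u" unfolding f_def gf_def
            using C u by (intro mult_left_mono add_left_mono) auto
          also have "\<dots> \<le> \<mu>" using below u by simp
          finally show "f u \<le> \<mu>" .
        qed
      qed
      have "C * ((b - a) powr (1 - \<beta>) + (b - a) powr (\<nu> - \<beta>)
           * (norm (\<omega> t - \<omega> s) / (min t b - s) powr \<nu>)) \<le> \<mu>"
        by (rule tendsto_upperbound[OF lim ev]) simp
      then show ?thesis unfolding p_def q_def st(1) tb .
    qed
    have ne: "holder_quot \<nu> \<omega> a b \<noteq> {}" unfolding holder_quot_def using ab2 by blast
    have H: "holder_semi \<nu> \<omega> a b \<le> (\<mu> / C - p) / q"
      unfolding holder_semi_def using ab2
    proof (simp, intro cSup_least[OF ne])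
      fix Q assume "Q \<in> holder_quot \<nu> \<omega> a b"
      from key[OF this] have "p + q * Q \<le> \<mu> / C" using C by (simp add: field_simps)
      then show "Q \<le> (\<mu> / C - p) / q" using q by (simp add: field_simps)
    qed
    have "g a b = C * (p + q * holder_semi \<nu> \<omega> a b)" unfolding gf_def p_def q_def ..
    also have "\<dots> \<le> C * (p + q * ((\<mu> / C - p) / q))"
      using H q C by (intro mult_left_mono add_left_mono) auto
    also have "\<dots> = \<mu>" using q C by (simp add: field_simps)
    finally show ?thesis .
  qed
  then show ?thesis unfolding a_def b_def .
qed

lemma ts_in: "ts i \<le> u \<Longrightarrow> u \<le> ts (Suc i) \<Longrightarrow> g (ts i) u \<le> \<mu>"
  using ts_below ts_end by (cases "u = ts (Suc i)") auto

lemma ts_step: "\<exists>\<delta>>0. \<forall>i. min T (ts i + \<delta>) \<le> ts (Suc i)"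
proof -
  obtain h where h: "h > 0" "\<forall>s t. 0 \<le> s \<and> s < t \<and> t \<le> T \<and> t - s \<le> h \<longrightarrow>
                      \<bar>\<omega> t - \<omega> s\<bar> / (t - s) powr \<nu> \<le> 1"
    using ol by (meson zero_less_one)
  define e where "e = \<mu> / (2 * C)"
  have e: "e > 0" unfolding e_def using mu C by simp
  define \<delta> where "\<delta> = min (min h 1) (min (e powr (1 / (1 - \<beta>))) (e powr (1 / (\<nu> - \<beta>))))"
  have \<delta>: "\<delta> > 0" unfolding \<delta>_def using h e by simp
  have pw: "d powr x \<le> e" if "0 \<le> d" "d \<le> e powr (1 / x)" "x > 0" for d x
  proof -
    have "d powr x \<le> (e powr (1 / x)) powr x" using that by (intro powr_mono2) auto
    also have "\<dots> = e" using that e by (simp add: powr_powr)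
    finally show ?thesis .
  qed
  have "min T (ts i + \<delta>) \<le> ts (Suc i)" for i
  proof -
    define a where "a = ts i"
    define u where "u = min T (a + \<delta>)"
    have a: "0 \<le> a" "a \<le> T" using ts_T[of i] unfolding a_def by auto
    have u: "a \<le> u" "u \<le> T" "u - a \<le> \<delta>" unfolding u_def using a \<delta> by auto
    have H: "holder_semi \<nu> \<omega> a u \<le> 1"
    proof (rule hs_le)
      fix s t assume st: "a \<le> s" "s < t" "t \<le> u"
      have "t - s \<le> h" using st u unfolding \<delta>_def by simp
      then have "\<bar>\<omega> t - \<omega> s\<bar> / (t - s) powr \<nu> \<le> 1" using h(2) st a u by auto
      then show "norm (\<omega> t - \<omega> s) \<le> 1 * (t - s) powr \<nu>" using st by (simp add: divide_le_eq)
    qed simp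
    have H0: "0 \<le> holder_semi \<nu> \<omega> a u" by (rule hs_nonneg[OF bqo]) (use a u in auto)
    have p1: "(u - a) powr (1 - \<beta>) \<le> e"
      by (rule pw) (use u beta nu in \<open>auto simp: \<delta>_def\<close>)
    have p2: "(u - a) powr (\<nu> - \<beta>) \<le> e"
      by (rule pw) (use u beta nu in \<open>auto simp: \<delta>_def\<close>)
    have "(u - a) powr (\<nu> - \<beta>) * holder_semi \<nu> \<omega> a u \<le> e * 1"
      using p2 H H0 e by (intro mult_mono) auto
    then have "g a u \<le> C * (e + e * 1)" unfolding gf_def using p1 C by (intro mult_left_mono add_mono) auto
    also have "\<dots> = \<mu>" unfolding e_def using C by simp
    finally have gu: "g a u \<le> \<mu>" .
    let ?S = "{t \<in> {ts i..T}. g (ts i) t \<le> \<mu>}"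
    have mem: "u \<in> ?S" using gu u unfolding a_def by simp
    have bdd: "bdd_above ?S" by (rule bdd_aboveI[of _ T]) auto
    have "u \<le> ts (Suc i)" unfolding ts_Suc using cSup_upper[OF mem bdd] .
    then show ?thesis unfolding u_def a_def .
  qed
  then show ?thesis using \<delta> by blast
qed

lemma ts_reach: "\<exists>n. ts n = T"
proof -
  obtain \<delta> where \<delta>: "\<delta> > 0" "\<And>i. min T (ts i + \<delta>) \<le> ts (Suc i)" using ts_step by blast
  have lb: "min T (real n * \<delta>) \<le> ts n" for n
  proof (induction n)
    case 0
    then show ?case using ts_T[of 0] T by simp
  next
    case (Suc n)
    have "min T (real (Suc n) * \<delta>) \<le> min T (ts n + \<delta>)"
      using Suc \<delta>(1) by (simp add: distrib_right min_def split: if_splits; linarith)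
    also have "\<dots> \<le> ts (Suc n)" by (rule \<delta>(2))
    finally show ?case .
  qed
  obtain n :: nat where n: "T / \<delta> < real n" using reals_Archimedean2 by blast
  then have "T < real n * \<delta>" using \<delta> by (simp add: divide_less_eq)
  then have "T \<le> ts n" using lb[of n] by simp
  then have "ts n = T" using ts_T[of n] by linarith
  then show ?thesis ..
qed

end

theorem lemma5:
  fixes z :: "real \<Rightarrow> 'a::euclidean_space" and \<omega> :: "real \<Rightarrow> real"
    and r T \<nu> \<beta> A C \<mu> :: real
  assumes r: "r > 0" and T: "T > 0"
    and nu: "1/2 < \<nu>" "\<nu> \<le> 1" and beta: "0 < \<beta>" "\<beta> < \<nu>"
    and omega_hol: "holder_space \<nu> 0 T \<omega>"
    and omega_lim: "\<forall>\<epsilon>>0. \<exists>h>0. \<forall>s t. 0 \<le> s \<and> s < t \<and> t \<le> T \<and> t - s \<le> h \<longrightarrow>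
                      \<bar>\<omega> t - \<omega> s\<bar> / (t - s) powr \<nu> \<le> \<epsilon>"
    and z_hol: "holder_space \<beta> (-r) T z"
    and A: "A > 0" and C: "C > 0"
    and hyp: "\<forall>s t. 0 \<le> s \<and> s \<le> t \<and> t \<le> T \<longrightarrow>
               holder_semi \<beta> z s t \<le> A + C * ((t - s) powr (1 - \<beta>)
                 + (t - s) powr (\<nu> - \<beta>) * holder_semi \<nu> \<omega> s t) * holder_norm \<beta> z (s - r) t"
    and mu: "0 < \<mu>" "\<mu> < min (1/2) C"
  shows "\<forall>t \<in> {0..T}. holder_norm \<beta> (\<lambda>u. z (t + u)) (-r) 0
           \<le> (1 - 2 * \<mu>) powr (- (real (count_stop C \<mu> \<beta> \<nu> \<omega> T t) + 1))
              * (A / \<mu> + holder_norm \<beta> z (-r) 0)"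
proof -
  have mu2: "\<mu> < 1/2" "\<mu> < C" using mu(2) min.cobounded1[of "1/2::real" C] min.cobounded2[of "1/2::real" C] by linarith+
  interpret stp C \<mu> \<beta> \<nu> T \<omega>
    by unfold_locales (use T C mu beta nu omega_hol omega_lim in auto)
  define \<phi> where "\<phi> t = holder_norm \<beta> z (-r) t" for t
  define \<rho> where "\<rho> = 1 / (1 - 2 * \<mu>)"
  define K where "K = A / \<mu> + \<phi> 0"
  have rho1: "1 \<le> \<rho>"
  proof -
    have p: "0 < 1 - 2 * \<mu>" "1 - 2 * \<mu> \<le> 1" using mu2(1) mu(1) by linarith+
    show ?thesis unfolding \<rho>_def using p by (simp add: le_divide_eq_1_pos)
  qed
  have phi0: "0 \<le> \<phi> t" if "0 \<le> t" "t \<le> T" for t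
    unfolding \<phi>_def by (rule hn_nonneg[OF z_hol beta(1)]) (use that r in auto)
  have K0: "0 \<le> K" unfolding K_def using phi0[of 0] T A mu by simp
  have step: "\<phi> t + A / \<mu> \<le> \<rho> * (\<phi> (ts i) + A / \<mu>)" if ti: "ts i \<le> t" "t \<le> ts (Suc i)" for i t
  proof -
    define a where "a = ts i"
    have a: "0 \<le> a" "a \<le> t" "t \<le> T" using ts_T[of i] ts_T[of "Suc i"] ti unfolding a_def by auto
    have gle: "g a t \<le> \<mu>" using ts_in[OF ti] unfolding a_def .
    have g0: "0 \<le> g a t" by (rule g_nonneg) (use a in auto)
    have H0: "0 \<le> holder_semi \<nu> \<omega> a t" by (rule hs_nonneg[OF bqo]) (use a in auto)
    have ta1: "t - a \<le> 1"
    proof (rule ccontr)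
      assume "\<not> t - a \<le> 1"
      then have "1 \<le> (t - a) powr (1 - \<beta>)" using beta nu by (intro ge_one_powr_ge_zero) auto
      moreover have "0 \<le> (t - a) powr (\<nu> - \<beta>) * holder_semi \<nu> \<omega> a t" using H0 by simp
      ultimately have "C * 1 \<le> g a t" unfolding gf_def using C by (intro mult_left_mono) auto
      then show False using gle mu2 by simp
    qed
    define S2 where "S2 = holder_semi \<beta> z a t"
    have split: "\<phi> t \<le> \<phi> a + 2 * S2" unfolding \<phi>_def S2_def
      by (rule hn_split[OF z_hol beta(1)]) (use a ta1 r in auto)
    have hn1: "holder_norm \<beta> z (a - r) t \<le> \<phi> t" unfolding \<phi>_def
      by (rule hn_mono[OF z_hol beta(1)]) (use a r in auto)
    have hn0: "0 \<le> holder_norm \<beta> z (a - r) t"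
      by (rule hn_nonneg[OF z_hol beta(1)]) (use a r in auto)
    have "S2 \<le> A + g a t * holder_norm \<beta> z (a - r) t"
      using hyp a unfolding S2_def gf_def by auto
    also have "g a t * holder_norm \<beta> z (a - r) t \<le> \<mu> * \<phi> t"
      using gle hn1 hn0 mu by (intro mult_mono) auto
    finally have "\<phi> t \<le> \<phi> a + 2 * A + 2 * \<mu> * \<phi> t" using split by simp
    then have "(1 - 2 * \<mu>) * (\<phi> t + A / \<mu>) \<le> \<phi> a + A / \<mu>"
      using mu by (simp add: algebra_simps)
    moreover have "0 < 1 - 2 * \<mu>" using mu2 by simp
    ultimately have "\<phi> t + A / \<mu> \<le> (\<phi> a + A / \<mu>) / (1 - 2 * \<mu>)"
      by (simp add: pos_le_divide_eq mult.commute)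
    then show ?thesis unfolding \<rho>_def a_def by simp
  qed
  have Q: "\<phi> (ts n) + A / \<mu> \<le> \<rho> ^ n * K" for n
  proof (induction n)
    case 0
    then show ?case unfolding K_def by simp
  next
    case (Suc n)
    have "\<phi> (ts (Suc n)) + A / \<mu> \<le> \<rho> * (\<phi> (ts n) + A / \<mu>)"
      by (rule step) (use ts_props[of n] in auto)
    also have "\<dots> \<le> \<rho> * (\<rho> ^ n * K)" using Suc rho1 by (intro mult_left_mono) auto
    finally show ?case by simp
  qed
  have bound: "\<phi> t + A / \<mu> \<le> \<rho> ^ Suc n * K" if "ts n \<le> t" "t \<le> ts (Suc n)" for n t
  proof -
    have "\<phi> t + A / \<mu> \<le> \<rho> * (\<phi> (ts n) + A / \<mu>)" by (rule step[OF that])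
    also have "\<dots> \<le> \<rho> * (\<rho> ^ n * K)" using Q[of n] rho1 by (intro mult_left_mono) auto
    finally show ?thesis by simp
  qed
  show ?thesis
  proof
    fix t assume t: "t \<in> {0..T}"
    obtain m where m: "ts m = T" using ts_reach by blast
    have ex: "\<exists>k. t \<le> ts (Suc k)"
      using t m ts_props[of m] by (intro exI[of _ m]) auto
    define n where "n = (LEAST k. t \<le> ts (Suc k))"
    have n1: "t \<le> ts (Suc n)" unfolding n_def by (rule LeastI_ex[OF ex])
    have n2: "ts j < t" if jn: "1 \<le> j" "j \<le> n" for j
    proof -
      obtain k where k: "j = Suc k" using jn by (cases j) auto
      have "k < n" using k jn by simp
      then have "\<not> t \<le> ts (Suc k)" unfolding n_def by (rule not_less_Least)
      then show ?thesis using k by simp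
    qed
    have n0: "ts n \<le> t"
    proof (cases n)
      case 0
      then show ?thesis using t by simp
    next
      case (Suc k)
      then show ?thesis using n2[of n] by simp
    qed
    define N where "N = count_stop C \<mu> \<beta> \<nu> \<omega> T t"
    have fin: "finite {i. i \<ge> 1 \<and> ts i < t}"
    proof (rule finite_subset)
      show "{i. i \<ge> 1 \<and> ts i < t} \<subseteq> {..n}"
      proof
        fix i assume i: "i \<in> {i. i \<ge> 1 \<and> ts i < t}"
        show "i \<in> {..n}"
        proof (rule ccontr)
          assume "i \<notin> {..n}"
          then have "Suc n \<le> i" by simp
          then have "ts (Suc n) \<le> ts i" by (rule ts_mono)
          then show False using i n1 by simp
        qed
      qed
    qed simp
    have "{1..n} \<subseteq> {i. i \<ge> 1 \<and> ts i < t}" using n2 by auto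
    then have "card {1..n} \<le> N" unfolding N_def count_stop_def by (rule card_mono[OF fin])
    then have nN: "n \<le> N" by simp
    have "holder_norm \<beta> (\<lambda>u. z (t + u)) (-r) 0 \<le> holder_norm \<beta> z (t - r) t"
      by (rule hn_shift[OF z_hol beta(1)]) (use t r in auto)
    also have "\<dots> \<le> \<phi> t" unfolding \<phi>_def
      by (rule hn_mono[OF z_hol beta(1)]) (use t r in auto)
    also have "\<dots> \<le> \<rho> ^ Suc n * K - A / \<mu>" using bound[OF n0 n1] by simp
    also have "\<dots> \<le> \<rho> ^ Suc n * K" using A mu by simp
    also have "\<dots> \<le> \<rho> ^ Suc N * K"
      using rho1 nN K0 by (intro mult_right_mono power_increasing) auto
    also have "\<rho> ^ Suc N = (1 - 2 * \<mu>) powr (- (real N + 1))"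
    proof -
      have pos: "0 < 1 - 2 * \<mu>" using mu2 by simp
      have "(1 - 2 * \<mu>) powr (- (real N + 1)) = inverse ((1 - 2 * \<mu>) powr (real (Suc N)))"
        using powr_minus[of "1 - 2 * \<mu>" "real N + 1"] by (simp add: add.commute)
      also have "\<dots> = inverse ((1 - 2 * \<mu>) ^ Suc N)" using pos by (simp only: powr_realpow)
      also have "\<dots> = \<rho> ^ Suc N" unfolding \<rho>_def by (simp add: power_one_over inverse_eq_divide)
      finally show ?thesis by simp
    qed
    finally show "holder_norm \<beta> (\<lambda>u. z (t + u)) (-r) 0
           \<le> (1 - 2 * \<mu>) powr (- (real (count_stop C \<mu> \<beta> \<nu> \<omega> T t) + 1))
              * (A / \<mu> + holder_norm \<beta> z (-r) 0)"
      unfolding N_def K_def \<phi>_def .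
  qed
qed

end
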